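(* Let $(P,w)$ be a naturally labeled poset with $n$ elements and let $\alpha$ be a composition of $n$. Then $$\sum_{\sigma\in\mathcal L_\alpha(P,w)}(-1)^{|\mathrm{Des}(\sigma)\setminus S_\alpha|}=|\mathcal L^*_\alpha(P,w)|.$$ In particular the left-hand side is nonnegative.
   Context: A composition $\alpha=(\alpha_1,\dots,\alpha_\ell)$ of $n$ is a sequence of positive integers summing to $n$; $S_\alpha=\{\alpha_1,\alpha_1+\alpha_2,\dots,\alpha_1+\dots+\alpha_{\ell-1}\}$; blocks $B_i(\alpha)=\{\alpha_1+\dots+\alpha_{i-1}+1,\dots,\alpha_1+\dots+\alpha_i\}$. A permutation $\sigma\in\mathfrak S_n$ (one-line notation) is $\alpha$-unimodal if for each $i$, writing $B_i(\alpha)=[a,b]$, there is $k\in[a,b]$ with $\sigma_a>\dots>\sigma_k<\dots<\sigma_b$. $\mathrm{Des}(\sigma)=\{i\in[n-1]:\sigma_i>\sigma_{i+1}\}$. A labeled poset $(P,w)$ is a finite poset $P$ with a bijection $w:P\to[n]$; it is naturally labeled if $x<_Py$ implies $w(x)<w(y)$. $\mathcal L(P,w)=\{\sigma\in\mathfrak S_n: \sigma^{-1}(w(x))<\sigma^{-1}(w(y))\text{ whenever }x<_Py\}$. $\mathcal L_\alpha(P,w)$ is the set of $\alpha$-unimodal $\sigma\in\mathcal L(P,w)$. For $\sigma\in\mathfrak S_n$ let $P_i^\alpha(\sigma)=\{w^{-1}(\sigma_j):j\in B_i(\alpha)\}$ with the induced order. $\mathcal L^*_\alpha(P,w)$ is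 the set of $\sigma\in\mathcal L_\alpha(P,w)$ such that $P_i^\alpha(\sigma)$ has a unique minimal element for every $i$. *)

theory Defs
  imports "HOL-Combinatorics.Permutations"
begin

definition is_composition :: "nat list \<Rightarrow> nat \<Rightarrow> bool" where
  "is_composition \<alpha> n \<longleftrightarrow> (\<forall>a\<in>set \<alpha>. 0 < a) \<and> sum_list \<alpha> = n"

definition comp_set :: "nat list \<Rightarrow> nat set" where
  "comp_set \<alpha> = {sum_list (take i \<alpha>) | i. 1 \<le> i \<and> i < length \<alpha>}"

(* Block B_{i+1}(alpha) (blocks indexed from 0 here, i < length alpha) *)
definition block :: "nat list \<Rightarrow> nat \<Rightarrow> nat set" where
  "block \<alpha> i = {sum_list (take i \<alpha>) + 1 .. sum_list (take (Suc i) \<alpha>)}"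

definition Des :: "nat \<Rightarrow> (nat \<Rightarrow> nat) \<Rightarrow> nat set" where
  "Des n \<sigma> = {i \<in> {1..n-1}. \<sigma> (Suc i) < \<sigma> i}"

definition alpha_unimodal :: "nat list \<Rightarrow> (nat \<Rightarrow> nat) \<Rightarrow> bool" where
  "alpha_unimodal \<alpha> \<sigma> \<longleftrightarrow>
     (\<forall>i < length \<alpha>. \<exists>k \<in> block \<alpha> i.
        (\<forall>j. j \<in> block \<alpha> i \<and> Suc j \<in> block \<alpha> i \<and> j < k \<longrightarrow> \<sigma> (Suc j) < \<sigma> j) \<and>
        (\<forall>j. j \<in> block \<alpha> i \<and> Suc j \<in> block \<alpha> i \<and> k \<le> j \<longrightarrow> \<sigma> j < \<sigma> (Suc j)))"

definition labeled_poset :: "'a set \<Rightarrow> ('a \<Rightarrow> 'a \<Rightarrow> bool) \<Rightarrow> ('a \<Rightarrow> nat) \<Rightarrow> nat \<Rightarrow> bool" where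
  "labeled_poset P le w n \<longleftrightarrow> finite P \<and> partial_order_on P {(x,y). x \<in> P \<and> y \<in> P \<and> le x y}
      \<and> bij_betw w P {1..n}"

definition strict :: "('a \<Rightarrow> 'a \<Rightarrow> bool) \<Rightarrow> 'a \<Rightarrow> 'a \<Rightarrow> bool" where
  "strict le x y \<longleftrightarrow> le x y \<and> x \<noteq> y"

definition naturally_labeled :: "'a set \<Rightarrow> ('a \<Rightarrow> 'a \<Rightarrow> bool) \<Rightarrow> ('a \<Rightarrow> nat) \<Rightarrow> bool" where
  "naturally_labeled P le w \<longleftrightarrow> (\<forall>x\<in>P. \<forall>y\<in>P. strict le x y \<longrightarrow> w x < w y)"

definition lin_ext :: "'a set \<Rightarrow> ('a \<Rightarrow> 'a \<Rightarrow> bool) \<Rightarrow> ('a \<Rightarrow> nat) \<Rightarrow> nat \<Rightarrow> (nat \<Rightarrow> nat) set" where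
  "lin_ext P le w n = {\<sigma>. \<sigma> permutes {1..n} \<and>
      (\<forall>x\<in>P. \<forall>y\<in>P. strict le x y \<longrightarrow> inv \<sigma> (w x) < inv \<sigma> (w y))}"

definition lin_ext_alpha :: "nat list \<Rightarrow> 'a set \<Rightarrow> ('a \<Rightarrow> 'a \<Rightarrow> bool) \<Rightarrow> ('a \<Rightarrow> nat) \<Rightarrow> nat \<Rightarrow> (nat \<Rightarrow> nat) set" where
  "lin_ext_alpha \<alpha> P le w n = {\<sigma> \<in> lin_ext P le w n. alpha_unimodal \<alpha> \<sigma>}"

definition block_poset :: "nat list \<Rightarrow> 'a set \<Rightarrow> ('a \<Rightarrow> nat) \<Rightarrow> (nat \<Rightarrow> nat) \<Rightarrow> nat \<Rightarrow> 'a set" where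
  "block_poset \<alpha> P w \<sigma> i = {inv_into P w (\<sigma> j) | j. j \<in> block \<alpha> i}"

definition unique_min :: "('a \<Rightarrow> 'a \<Rightarrow> bool) \<Rightarrow> 'a set \<Rightarrow> bool" where
  "unique_min le Q \<longleftrightarrow> (\<exists>!x. x \<in> Q \<and> \<not> (\<exists>y\<in>Q. strict le y x))"

definition lin_ext_alpha_star :: "nat list \<Rightarrow> 'a set \<Rightarrow> ('a \<Rightarrow> 'a \<Rightarrow> bool) \<Rightarrow> ('a \<Rightarrow> nat) \<Rightarrow> nat \<Rightarrow> (nat \<Rightarrow> nat) set" where
  "lin_ext_alpha_star \<alpha> P le w n = {\<sigma> \<in> lin_ext_alpha \<alpha> P le w n.
      \<forall>i < length \<alpha>. unique_min le (block_poset \<alpha> P w \<sigma> i)}"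

end

theory Submission
  imports Defs
begin


definition prec :: "nat set \<Rightarrow> nat \<Rightarrow> nat \<Rightarrow> bool" where
  "prec L x y \<longleftrightarrow> (x \<in> L \<and> (y \<notin> L \<or> y < x)) \<or> (x \<notin> L \<and> y \<notin> L \<and> x < y)"

lemma prec_irrefl: "\<not> prec L x x" by (auto simp: prec_def)
lemma prec_asym: "prec L x y \<Longrightarrow> \<not> prec L y x" by (auto simp: prec_def)
lemma prec_trans: "prec L x y \<Longrightarrow> prec L y z \<Longrightarrow> prec L x z" by (auto simp: prec_def)
lemma prec_total: "x \<noteq> y \<Longrightarrow> prec L x y \<or> prec L y x" by (auto simp: prec_def)

definition rk :: "nat set \<Rightarrow> nat set \<Rightarrow> nat \<Rightarrow> nat" where
  "rk L X x = card {y\<in>X. prec L y x}"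

lemma rk_mono:
  assumes "finite X" "x \<in> X" "y \<in> X" "prec L y x"
  shows "rk L X y < rk L X x"
proof -
  have "{z\<in>X. prec L z y} \<subset> {z\<in>X. prec L z x}"
    using assms prec_trans prec_irrefl by blast
  then show ?thesis unfolding rk_def using assms(1) by (simp add: psubset_card_mono)
qed

lemma rk_lt: assumes "finite X" "x \<in> X" shows "rk L X x < card X"
proof -
  have "{z\<in>X. prec L z x} \<subseteq> X - {x}" using prec_irrefl by blast
  hence "rk L X x \<le> card (X - {x})" unfolding rk_def using assms by (intro card_mono) auto
  moreover have "card (X - {x}) < card X" using assms by (rule card_Diff1_less)
  ultimately show ?thesis by linarith
qed

lemma rk_inj: assumes "finite X" shows "inj_on (rk L X) X"
proof (rule inj_onI)
  fix x y assume "x \<in> X" "y \<in> X" "rk L X x = rk L X y"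
  thus "x = y" using rk_mono[OF assms] prec_total by (metis less_irrefl)
qed

lemma rk_bij: assumes "finite X" shows "bij_betw (rk L X) X {..<card X}"
proof -
  have "rk L X ` X \<subseteq> {..<card X}" using rk_lt[OF assms] by auto
  moreover have "card (rk L X ` X) = card {..<card X}"
    using rk_inj[OF assms] by (simp add: card_image)
  ultimately have "rk L X ` X = {..<card X}" by (simp add: card_subset_eq)
  thus ?thesis using rk_inj[OF assms] by (simp add: bij_betw_def)
qed

lemma rk_prec: assumes "finite X" "x \<in> X" "y \<in> X" "rk L X y < rk L X x" shows "prec L y x"
  using assms rk_mono prec_total by (metis less_asym less_irrefl)

lemma rk_L: assumes "finite X" "L \<subseteq> X" "x \<in> X" shows "x \<in> L \<longleftrightarrow> rk L X x < card L"
proof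
  assume xL: "x \<in> L"
  have "{y\<in>X. prec L y x} \<subseteq> L - {x}" using xL prec_irrefl by (auto simp: prec_def)
  hence "rk L X x \<le> card (L - {x})" unfolding rk_def
    using assms by (meson card_mono finite_Diff finite_subset)
  thus "rk L X x < card L" using xL assms
    by (metis card_Diff1_less finite_subset le_less_trans)
next
  assume "rk L X x < card L"
  moreover { assume xL: "x \<notin> L"
    have "L \<subseteq> {y\<in>X. prec L y x}" using xL assms by (auto simp: prec_def)
    hence "card L \<le> rk L X x" unfolding rk_def using assms by (simp add: card_mono) }
  ultimately show "x \<in> L" by linarith
qed

definition arr :: "nat \<Rightarrow> nat set \<Rightarrow> nat set \<Rightarrow> nat \<Rightarrow> nat" where
  "arr a X L p = inv_into X (rk L X) (p - a)"

lemma arr_in: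
  assumes "finite X" "a \<le> p" "p < a + card X"
  shows "arr a X L p \<in> X" "rk L X (arr a X L p) = p - a"
proof -
  have b: "bij_betw (rk L X) X {..<card X}" by (rule rk_bij[OF assms(1)])
  have "p - a \<in> {..<card X}" using assms by auto
  thus "arr a X L p \<in> X" "rk L X (arr a X L p) = p - a" unfolding arr_def
    using b by (auto simp: bij_betw_def inv_into_into f_inv_into_f)
qed

lemma arr_unique:
  assumes "finite X" "a \<le> p" "p < a + card X" "x \<in> X" "rk L X x = p - a"
  shows "arr a X L p = x"
  using arr_in[OF assms(1-3)] rk_inj[OF assms(1)] assms(4,5) by (metis inj_on_eq_iff)

lemma arr_image:
  assumes "finite X" shows "arr a X L ` {a..<a + card X} = X"
proof
  show "arr a X L ` {a..<a + card X} \<subseteq> X" using arr_in[OF assms] by auto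
  show "X \<subseteq> arr a X L ` {a..<a + card X}"
  proof
    fix x assume x: "x \<in> X"
    let ?p = "a + rk L X x"
    have "?p < a + card X" using rk_lt[OF assms x] by simp
    hence "arr a X L ?p = x" using arr_unique[OF assms _ _ x] by simp
    thus "x \<in> arr a X L ` {a..<a + card X}" using \<open>?p < a + card X\<close>
      by (intro rev_image_eqI[of ?p]) auto
  qed
qed

lemma arr_inj: assumes "finite X" shows "inj_on (arr a X L) {a..<a + card X}"
proof (rule inj_onI)
  fix p q assume "p \<in> {a..<a + card X}" "q \<in> {a..<a + card X}" "arr a X L p = arr a X L q"
  thus "p = q" using arr_in[OF assms, of a] by (metis atLeastLessThan_iff le_add_diff_inverse)
qed

definition unimod_at :: "(nat \<Rightarrow> nat) \<Rightarrow> nat \<Rightarrow> nat \<Rightarrow> nat \<Rightarrow> bool" where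
  "unimod_at \<tau> a c k \<longleftrightarrow> a \<le> k \<and> k < a + c \<and>
     (\<forall>j. a \<le> j \<and> Suc j < a + c \<and> j < k \<longrightarrow> \<tau> (Suc j) < \<tau> j) \<and>
     (\<forall>j. a \<le> j \<and> Suc j < a + c \<and> k \<le> j \<longrightarrow> \<tau> j < \<tau> (Suc j))"

lemma V1:
  assumes "unimod_at \<tau> a c k" "a \<le> p" "p < q" "q \<le> k"
  shows "\<tau> q < \<tau> p"
proof -
  have "\<forall>q. p < q \<and> q \<le> k \<longrightarrow> \<tau> q < \<tau> p"
  proof (intro allI impI)
    fix q assume "p < q \<and> q \<le> k"
    then obtain d where q: "q = p + Suc d" and "p + Suc d \<le> k"
      using less_imp_Suc_add[of p q] by auto
    then show "\<tau> q < \<tau> p"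
    proof (induction d arbitrary: q)
      case 0 thus ?case using assms unfolding unimod_at_def by auto
    next
      case (Suc d)
      have "\<tau> (p + Suc d) < \<tau> p" using Suc by auto
      moreover have "\<tau> (Suc (p + Suc d)) < \<tau> (p + Suc d)"
        using assms Suc.prems unfolding unimod_at_def by auto
      ultimately show ?case using Suc.prems by simp
    qed
  qed
  thus ?thesis using assms by blast
qed

lemma V2:
  assumes "unimod_at \<tau> a c k" "k \<le> p" "p < q" "q < a + c"
  shows "\<tau> p < \<tau> q"
proof -
  obtain d where q: "q = p + Suc d" using assms less_imp_Suc_add[of p q] by auto
  have "p + Suc d < a + c" using q assms by simp
  then have "\<tau> p < \<tau> (p + Suc d)"
  proof (induction d)
    case 0 thus ?case using assms unfolding unimod_at_def by auto
  next
    case (Suc d)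
    have "\<tau> p < \<tau> (p + Suc d)" using Suc by auto
    moreover have "\<tau> (p + Suc d) < \<tau> (Suc (p + Suc d))"
      using assms Suc.prems unfolding unimod_at_def by auto
    ultimately show ?case by simp
  qed
  thus ?thesis using q by simp
qed

lemma V3:
  assumes "unimod_at \<tau> a c k"
  shows "{j. a \<le> j \<and> Suc j < a + c \<and> \<tau> (Suc j) < \<tau> j} = {a..<k}"
proof -
  have "a \<le> j \<and> Suc j < a + c \<and> \<tau> (Suc j) < \<tau> j \<longleftrightarrow> a \<le> j \<and> j < k" for j
  proof
    assume h: "a \<le> j \<and> Suc j < a + c \<and> \<tau> (Suc j) < \<tau> j"
    show "a \<le> j \<and> j < k"
    proof (rule ccontr)
      assume "\<not> (a \<le> j \<and> j < k)"
      hence "k \<le> j" using h by auto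
      moreover have "\<forall>j. a \<le> j \<and> Suc j < a + c \<and> k \<le> j \<longrightarrow> \<tau> j < \<tau> (Suc j)"
        using assms unfolding unimod_at_def by simp
      ultimately have "\<tau> j < \<tau> (Suc j)" using h by simp
      thus False using h by simp
    qed
  next
    assume h: "a \<le> j \<and> j < k"
    thus "a \<le> j \<and> Suc j < a + c \<and> \<tau> (Suc j) < \<tau> j" using assms unfolding unimod_at_def by auto
  qed
  thus ?thesis by (simp add: set_eq_iff)
qed

lemma V_mem:
  assumes "unimod_at \<tau> a c k" "inj_on \<tau> {a..<a+c}" "a \<le> p" "p < a + c"
  shows "\<tau> p \<in> \<tau> ` {a..<k} \<longleftrightarrow> p < k"
proof -
  have "{a..<k} \<subseteq> {a..<a+c}" using assms unfolding unimod_at_def by auto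
  thus ?thesis using assms inj_on_image_mem_iff[OF assms(2), of p "{a..<k}"] by auto
qed

lemma V_order:
  assumes u: "unimod_at \<tau> a c k" and inj: "inj_on \<tau> {a..<a+c}"
    and "a \<le> p" "p < q" "q < a + c"
  shows "prec (\<tau> ` {a..<k}) (\<tau> p) (\<tau> q)"
proof -
  have mp: "\<tau> p \<in> \<tau> ` {a..<k} \<longleftrightarrow> p < k" using V_mem[OF u inj] assms by auto
  have mq: "\<tau> q \<in> \<tau> ` {a..<k} \<longleftrightarrow> q < k" using V_mem[OF u inj] assms by auto
  show ?thesis
  proof (cases "q < k")
    case True
    thus ?thesis using V1[OF u, of p q] mp mq assms by (auto simp: prec_def)
  next
    case False
    show ?thesis
    proof (cases "p < k")
      case True thus ?thesis using False mp mq by (auto simp: prec_def)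
    next
      case False
      thus ?thesis using V2[OF u, of p q] mp mq assms by (auto simp: prec_def)
    qed
  qed
qed

lemma V_arr:
  assumes u: "unimod_at \<tau> a c k" and inj: "inj_on \<tau> {a..<a+c}" and "a \<le> p" "p < a + c"
  shows "\<tau> p = arr a (\<tau> ` {a..<a+c}) (\<tau> ` {a..<k}) p"
proof -
  let ?X = "\<tau> ` {a..<a+c}" and ?L = "\<tau> ` {a..<k}"
  have cX: "card ?X = c" using inj by (simp add: card_image)
  have "{y\<in>?X. prec ?L y (\<tau> p)} = \<tau> ` {a..<p}"
  proof
    show "\<tau> ` {a..<p} \<subseteq> {y\<in>?X. prec ?L y (\<tau> p)}"
      using V_order[OF u inj] assms by auto
    show "{y\<in>?X. prec ?L y (\<tau> p)} \<subseteq> \<tau> ` {a..<p}"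
    proof
      fix y assume "y \<in> {y\<in>?X. prec ?L y (\<tau> p)}"
      then obtain q where q: "a \<le> q" "q < a + c" "y = \<tau> q" and pr: "prec ?L (\<tau> q) (\<tau> p)" by auto
      have "q < p"
      proof (rule ccontr)
        assume "\<not> q < p"
        then consider "q = p" | "p < q" by linarith
        thus False
        proof cases
          case 1 thus False using pr prec_irrefl by metis
        next
          case 2 thus False using V_order[OF u inj, of p q] q assms pr prec_asym by blast
        qed
      qed
      thus "y \<in> \<tau> ` {a..<p}" using q by auto
    qed
  qed
  moreover have "card (\<tau> ` {a..<p}) = p - a"
    using inj assms by (subst card_image) (auto intro: inj_on_subset)
  ultimately have "rk ?L ?X (\<tau> p) = p - a" unfolding rk_def by simp
  thus ?thesis using arr_unique[of ?X a p "\<tau> p" ?L] cX assms by simp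
qed

lemma arr_unimod:
  assumes "finite X" "X \<noteq> {}" "L \<subseteq> X - {Min X}"
  shows "unimod_at (arr a X L) a (card X) (a + card L)"
        "arr a X L ` {a..<a + card L} = L"
proof -
  let ?m = "Min X" and ?t = "arr a X L"
  have mX: "?m \<in> X" using assms by simp
  have LX: "L \<subseteq> X" using assms by auto
  have fL: "finite L" using assms finite_subset LX by blast
  have cL: "card L < card X"
  proof -
    have "card L \<le> card (X - {?m})" using assms by (intro card_mono) auto
    moreover have "card (X - {?m}) < card X" using assms(1) mX by (rule card_Diff1_less)
    ultimately show ?thesis by linarith
  qed
  have rm: "rk L X ?m = card L"
  proof -
    have mL: "?m \<notin> L" using assms by auto
    have "y \<in> L" if "y \<in> X" "prec L y ?m" for y
    proof (rule ccontr)
      assume "y \<notin> L"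
      hence "y < ?m" using that mL by (auto simp: prec_def)
      moreover have "?m \<le> y" using assms(1) that(1) by simp
      ultimately show False by simp
    qed
    moreover have "prec L y ?m" if "y \<in> L" for y using that mL by (auto simp: prec_def)
    ultimately have "{y\<in>X. prec L y ?m} = L" using LX by auto
    thus ?thesis unfolding rk_def by simp
  qed
  have tk: "?t (a + card L) = ?m" using arr_unique[OF assms(1), of a "a + card L" ?m L] cL mX rm by simp
  have inL: "?t j \<in> L \<longleftrightarrow> j < a + card L" if "a \<le> j" "j < a + card X" for j
    using rk_L[OF assms(1) LX arr_in(1)[OF assms(1) that]] arr_in(2)[OF assms(1) that] that by auto
  have ord: "prec L (?t p) (?t q)" if "a \<le> p" "p < q" "q < a + card X" for p q
  proof -
    have q1: "a \<le> q" "q < a + card X" using that by auto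
    have p1: "a \<le> p" "p < a + card X" using that by auto
    have "rk L X (?t p) < rk L X (?t q)"
      using arr_in(2)[OF assms(1) p1] arr_in(2)[OF assms(1) q1] that by simp
    thus ?thesis using rk_prec[OF assms(1) arr_in(1)[OF assms(1) q1] arr_in(1)[OF assms(1) p1]] by simp
  qed
  show "unimod_at ?t a (card X) (a + card L)"
    unfolding unimod_at_def
  proof (intro conjI allI impI)
    show "a \<le> a + card L" by simp
    show "a + card L < a + card X" using cL by simp
  next
    fix j assume j: "a \<le> j \<and> Suc j < a + card X \<and> j < a + card L"
    have tj: "?t j \<in> L" using inL j by auto
    show "?t (Suc j) < ?t j"
    proof (cases "Suc j = a + card L")
      case True
      have "?t j \<in> X - {?m}" using tj assms by auto
      hence "?m \<le> ?t j" "?t j \<noteq> ?m" using assms(1) by auto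
      hence "?m < ?t j" by simp
      thus ?thesis using tk True by simp
    next
      case False
      hence "?t (Suc j) \<in> L" using inL j by auto
      thus ?thesis using ord[of j "Suc j"] j tj by (auto simp: prec_def)
    qed
  next
    fix j assume j: "a \<le> j \<and> Suc j < a + card X \<and> a + card L \<le> j"
    have "?t j \<notin> L" "?t (Suc j) \<notin> L" using inL j by auto
    thus "?t j < ?t (Suc j)" using ord[of j "Suc j"] j by (auto simp: prec_def)
  qed
  show "?t ` {a..<a + card L} = L"
  proof
    show "?t ` {a..<a + card L} \<subseteq> L" using inL cL by auto
    show "L \<subseteq> ?t ` {a..<a + card L}"
    proof
      fix x assume x: "x \<in> L"
      hence xX: "x \<in> X" using LX by auto
      have r: "rk L X x < card L" using rk_L[OF assms(1) LX xX] x by simp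
      hence "?t (a + rk L X x) = x" using arr_unique[OF assms(1) _ _ xX] cL by simp
      thus "x \<in> ?t ` {a..<a + card L}" using r by (intro rev_image_eqI[of "a + rk L X x"]) auto
    qed
  qed
qed


lemma arr_ord:
  assumes "finite X" "a \<le> p" "p < q" "q < a + card X"
  shows "prec L (arr a X L p) (arr a X L q)"
proof -
  have q1: "a \<le> q" "q < a + card X" using assms by auto
  have p1: "a \<le> p" "p < a + card X" using assms by auto
  have "rk L X (arr a X L p) < rk L X (arr a X L q)"
    using arr_in(2)[OF assms(1) p1] arr_in(2)[OF assms(1) q1] assms by simp
  thus ?thesis using rk_prec[OF assms(1) arr_in(1)[OF assms(1) q1] arr_in(1)[OF assms(1) p1]] by simp
qed



lemma cover_gen:
  fixes f :: "nat \<Rightarrow> nat"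
  assumes "f 0 = 0" "0 < j" "j \<le> f N"
  shows "\<exists>i<N. f i < j \<and> j \<le> f (Suc i)"
  using assms(3)
proof (induction N)
  case 0 thus ?case using assms by simp
next
  case (Suc N)
  show ?case
  proof (cases "j \<le> f N")
    case True thus ?thesis using Suc.IH by (meson less_SucI)
  next
    case False thus ?thesis using Suc.prems by (intro exI[of _ N]) auto
  qed
qed

lemma unimod_at_cong:
  assumes "\<And>p. a \<le> p \<Longrightarrow> p < a + c \<Longrightarrow> f p = g p"
  shows "unimod_at f a c k = unimod_at g a c k"
proof -
  have "(\<forall>j. a \<le> j \<and> Suc j < a + c \<and> j < k \<longrightarrow> f (Suc j) < f j) =
        (\<forall>j. a \<le> j \<and> Suc j < a + c \<and> j < k \<longrightarrow> g (Suc j) < g j)"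
    using assms by (metis Suc_lessD le_SucI)
  moreover have "(\<forall>j. a \<le> j \<and> Suc j < a + c \<and> k \<le> j \<longrightarrow> f j < f (Suc j)) =
        (\<forall>j. a \<le> j \<and> Suc j < a + c \<and> k \<le> j \<longrightarrow> g j < g (Suc j))"
    using assms by (metis Suc_lessD le_SucI)
  ultimately show ?thesis unfolding unimod_at_def by simp
qed

lemma sum_involution:
  fixes f :: "'b \<Rightarrow> int"
  assumes "finite N" "\<And>x. x \<in> N \<Longrightarrow> g x \<in> N" "\<And>x. x \<in> N \<Longrightarrow> g (g x) = x"
    "\<And>x. x \<in> N \<Longrightarrow> f (g x) = - f x"
  shows "sum f N = 0"
proof -
  have b: "bij_betw g N N" using assms by (intro bij_betw_byWitness[of N g g]) auto
  have "sum f N = sum (f \<circ> g) N" using sum.reindex_bij_betw[OF b, of f] by simp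
  also have "\<dots> = sum (\<lambda>x. - f x) N" using assms(4) by (intro sum.cong) auto
  also have "\<dots> = - sum f N" by (simp add: sum_negf)
  finally show ?thesis by simp
qed

locale TP =
  fixes P :: "'a set" and le :: "'a \<Rightarrow> 'a \<Rightarrow> bool" and w :: "'a \<Rightarrow> nat"
    and n :: nat and \<alpha> :: "nat list"
  assumes lp: "labeled_poset P le w n" and nl: "naturally_labeled P le w"
    and comp: "is_composition \<alpha> n"
begin

abbreviation As :: "nat \<Rightarrow> nat" where "As r \<equiv> sum_list (take r \<alpha>)"

definition st :: "nat \<Rightarrow> nat" where "st i = As i + 1"

lemma As_mono: "r \<le> s \<Longrightarrow> As r \<le> As s"
proof -
  assume "r \<le> s"
  then obtain d where "s = r + d" using le_Suc_ex by blast
  thus ?thesis by (simp add: take_add)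
qed

lemma As_Suc: "i < length \<alpha> \<Longrightarrow> As (Suc i) = As i + \<alpha> ! i"
  by (simp add: take_Suc_conv_app_nth)

lemma pos: "i < length \<alpha> \<Longrightarrow> 0 < \<alpha> ! i"
  using comp unfolding is_composition_def by (meson nth_mem)

lemma As_len: "As (length \<alpha>) = n"
  using comp unfolding is_composition_def by simp

lemma As_le_n: "As r \<le> n"
  using As_len by (metis nat_le_linear take_all order_refl As_mono)

lemma block_eq: "i < length \<alpha> \<Longrightarrow> block \<alpha> i = {st i..<st i + \<alpha> ! i}"
  unfolding block_def st_def using As_Suc by auto

lemma block_sub: "block \<alpha> i \<subseteq> {1..n}"
  unfolding block_def using As_le_n[of "Suc i"] by auto

lemma block_disj:
  assumes "i \<noteq> j" shows "block \<alpha> i \<inter> block \<alpha> j = {}"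
proof -
  { fix i j :: nat assume "i < j"
    hence "As (Suc i) \<le> As j" by (intro As_mono) simp
    hence "block \<alpha> i \<inter> block \<alpha> j = {}" unfolding block_def by auto }
  thus ?thesis using assms by (metis inf_commute nat_neq_iff)
qed

lemma cover:
  assumes "j \<in> {1..n}" shows "\<exists>i<length \<alpha>. As i < j \<and> j \<le> As (Suc i)"
  using cover_gen[of As j "length \<alpha>"] assms As_len by simp

lemma internal_not_S:
  assumes "i < length \<alpha>" "j \<in> block \<alpha> i" "Suc j \<in> block \<alpha> i"
  shows "j \<notin> comp_set \<alpha>"
proof
  assume "j \<in> comp_set \<alpha>"
  then obtain r where r: "j = As r" "1 \<le> r" "r < length \<alpha>" unfolding comp_set_def by auto
  show False
  proof (cases "r \<le> i")
    case True thus False using As_mono[OF True] r assms unfolding block_def by auto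
  next
    case False hence "Suc i \<le> r" by simp
    thus False using As_mono[of "Suc i" r] r assms unfolding block_def by auto
  qed
qed

lemma nonS_internal:
  assumes "j \<in> {1..n-1}" "j \<notin> comp_set \<alpha>"
  shows "\<exists>i<length \<alpha>. j \<in> block \<alpha> i \<and> Suc j \<in> block \<alpha> i"
proof -
  have "j \<in> {1..n}" using assms by auto
  then obtain i where i: "i < length \<alpha>" "As i < j" "j \<le> As (Suc i)" using cover by blast
  have "j \<noteq> As (Suc i)"
  proof
    assume e: "j = As (Suc i)"
    show False
    proof (cases "Suc i < length \<alpha>")
      case True
      hence "j \<in> comp_set \<alpha>" unfolding comp_set_def using e by auto
      thus False using assms by simp
    next
      case False
      hence "Suc i = length \<alpha>" using i by simp
      thus False using e As_len assms by auto
    qed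
  qed
  thus ?thesis using i unfolding block_def by (intro exI[of _ i]) auto
qed

lemma Int_range: "j \<in> block \<alpha> i \<Longrightarrow> Suc j \<in> block \<alpha> i \<Longrightarrow> j \<in> {1..n-1}"
  using block_sub by fastforce

abbreviation iw :: "nat \<Rightarrow> 'a" where "iw \<equiv> inv_into P w"

lemma wbij: "bij_betw w P {1..n}" using lp unfolding labeled_poset_def by simp

lemma iw_in: "v \<in> {1..n} \<Longrightarrow> iw v \<in> P \<and> w (iw v) = v"
  using wbij by (metis bij_betw_def f_inv_into_f inv_into_into)

lemma iw_w: "x \<in> P \<Longrightarrow> iw (w x) = x"
  using wbij by (meson bij_betw_def inv_into_f_f)

lemma w_in: "x \<in> P \<Longrightarrow> w x \<in> {1..n}"
  using wbij by (meson bij_betwE)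

lemma iw_inj: "u \<in> {1..n} \<Longrightarrow> v \<in> {1..n} \<Longrightarrow> iw u = iw v \<Longrightarrow> u = v"
  using iw_in by metis

lemma natl: "u \<in> {1..n} \<Longrightarrow> v \<in> {1..n} \<Longrightarrow> strict le (iw u) (iw v) \<Longrightarrow> u < v"
  using nl iw_in unfolding naturally_labeled_def by metis

abbreviation LE where "LE \<equiv> lin_ext_alpha \<alpha> P le w n"

lemma LE_perm: "\<sigma> \<in> LE \<Longrightarrow> \<sigma> permutes {1..n}"
  unfolding lin_ext_alpha_def lin_ext_def by simp

lemma LE_uni: "\<sigma> \<in> LE \<Longrightarrow> alpha_unimodal \<alpha> \<sigma>"
  unfolding lin_ext_alpha_def by simp

lemma LE_lin:
  assumes "\<sigma> \<in> LE" "u \<in> {1..n}" "v \<in> {1..n}" "strict le (iw u) (iw v)"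
  shows "inv \<sigma> u < inv \<sigma> v"
proof -
  have "\<forall>x\<in>P. \<forall>y\<in>P. strict le x y \<longrightarrow> inv \<sigma> (w x) < inv \<sigma> (w y)"
    using assms(1) unfolding lin_ext_alpha_def lin_ext_def by simp
  thus ?thesis using iw_in[OF assms(2)] iw_in[OF assms(3)] assms(4) by metis
qed

lemma unimod_block:
  assumes i: "i < length \<alpha>"
  shows "(\<exists>k\<in>block \<alpha> i.
        (\<forall>j. j \<in> block \<alpha> i \<and> Suc j \<in> block \<alpha> i \<and> j < k \<longrightarrow> \<sigma> (Suc j) < \<sigma> j) \<and>
        (\<forall>j. j \<in> block \<alpha> i \<and> Suc j \<in> block \<alpha> i \<and> k \<le> j \<longrightarrow> \<sigma> j < \<sigma> (Suc j)))
     \<longleftrightarrow> (\<exists>k. unimod_at \<sigma> (st i) (\<alpha> ! i) k)"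
proof -
  have e: "(j \<in> block \<alpha> i \<and> Suc j \<in> block \<alpha> i) = (st i \<le> j \<and> Suc j < st i + \<alpha> ! i)" for j
    using block_eq[OF i] by auto
  have e2: "k \<in> block \<alpha> i \<longleftrightarrow> st i \<le> k \<and> k < st i + \<alpha> ! i" for k
    using block_eq[OF i] by auto
  show ?thesis
  proof
    assume "\<exists>k\<in>block \<alpha> i.
        (\<forall>j. j \<in> block \<alpha> i \<and> Suc j \<in> block \<alpha> i \<and> j < k \<longrightarrow> \<sigma> (Suc j) < \<sigma> j) \<and>
        (\<forall>j. j \<in> block \<alpha> i \<and> Suc j \<in> block \<alpha> i \<and> k \<le> j \<longrightarrow> \<sigma> j < \<sigma> (Suc j))"
    then obtain k where k: "k \<in> block \<alpha> i"
      and c1: "\<And>j. j \<in> block \<alpha> i \<Longrightarrow> Suc j \<in> block \<alpha> i \<Longrightarrow> j < k \<Longrightarrow> \<sigma> (Suc j) < \<sigma> j"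
      and c2: "\<And>j. j \<in> block \<alpha> i \<Longrightarrow> Suc j \<in> block \<alpha> i \<Longrightarrow> k \<le> j \<Longrightarrow> \<sigma> j < \<sigma> (Suc j)"
      by blast
    have "unimod_at \<sigma> (st i) (\<alpha> ! i) k"
      unfolding unimod_at_def
    proof (intro conjI allI impI)
      show "st i \<le> k" "k < st i + \<alpha> ! i" using k e2 by auto
    next
      fix j assume "st i \<le> j \<and> Suc j < st i + \<alpha> ! i \<and> j < k"
      thus "\<sigma> (Suc j) < \<sigma> j" using c1 e[of j] by simp
    next
      fix j assume "st i \<le> j \<and> Suc j < st i + \<alpha> ! i \<and> k \<le> j"
      thus "\<sigma> j < \<sigma> (Suc j)" using c2 e[of j] by simp
    qed
    thus "\<exists>k. unimod_at \<sigma> (st i) (\<alpha> ! i) k" ..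
  next
    assume "\<exists>k. unimod_at \<sigma> (st i) (\<alpha> ! i) k"
    then obtain k where u: "unimod_at \<sigma> (st i) (\<alpha> ! i) k" ..
    have c1: "\<And>j. st i \<le> j \<Longrightarrow> Suc j < st i + \<alpha> ! i \<Longrightarrow> j < k \<Longrightarrow> \<sigma> (Suc j) < \<sigma> j"
      and c2: "\<And>j. st i \<le> j \<Longrightarrow> Suc j < st i + \<alpha> ! i \<Longrightarrow> k \<le> j \<Longrightarrow> \<sigma> j < \<sigma> (Suc j)"
      and k: "st i \<le> k" "k < st i + \<alpha> ! i"
      using u unfolding unimod_at_def by auto
    have kb: "k \<in> block \<alpha> i" using k e2 by simp
    show "\<exists>k\<in>block \<alpha> i.
        (\<forall>j. j \<in> block \<alpha> i \<and> Suc j \<in> block \<alpha> i \<and> j < k \<longrightarrow> \<sigma> (Suc j) < \<sigma> j) \<and>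
        (\<forall>j. j \<in> block \<alpha> i \<and> Suc j \<in> block \<alpha> i \<and> k \<le> j \<longrightarrow> \<sigma> j < \<sigma> (Suc j))"
    proof (intro bexI[OF _ kb] conjI allI impI)
      fix j assume "j \<in> block \<alpha> i \<and> Suc j \<in> block \<alpha> i \<and> j < k"
      thus "\<sigma> (Suc j) < \<sigma> j" using c1 e[of j] by simp
    next
      fix j assume "j \<in> block \<alpha> i \<and> Suc j \<in> block \<alpha> i \<and> k \<le> j"
      thus "\<sigma> j < \<sigma> (Suc j)" using c2 e[of j] by simp
    qed
  qed
qed

lemma unimodal_iff:
  "alpha_unimodal \<alpha> \<sigma> \<longleftrightarrow> (\<forall>i<length \<alpha>. \<exists>k. unimod_at \<sigma> (st i) (\<alpha> ! i) k)"
  unfolding alpha_unimodal_def using unimod_block by simp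

definition X :: "(nat \<Rightarrow> nat) \<Rightarrow> nat \<Rightarrow> nat set" where "X \<sigma> i = \<sigma> ` block \<alpha> i"
definition Dint :: "(nat \<Rightarrow> nat) \<Rightarrow> nat \<Rightarrow> nat set" where
  "Dint \<tau> i = {j. j \<in> block \<alpha> i \<and> Suc j \<in> block \<alpha> i \<and> \<tau> (Suc j) < \<tau> j}"
definition left :: "(nat \<Rightarrow> nat) \<Rightarrow> nat \<Rightarrow> nat set" where "left \<tau> i = \<tau> ` Dint \<tau> i"
definition minl :: "nat set \<Rightarrow> nat set" where
  "minl Y = {v\<in>Y. \<forall>u\<in>Y. \<not> strict le (iw u) (iw v)}"

lemma Dint_eq:
  assumes i: "i < length \<alpha>" and u: "unimod_at \<tau> (st i) (\<alpha> ! i) k"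
  shows "Dint \<tau> i = {st i..<k}"
proof -
  have "Dint \<tau> i = {j. st i \<le> j \<and> Suc j < st i + \<alpha> ! i \<and> \<tau> (Suc j) < \<tau> j}"
    unfolding Dint_def using block_eq[OF i] by auto
  thus ?thesis using V3[OF u] by simp
qed

lemma valley: "\<sigma> \<in> LE \<Longrightarrow> i < length \<alpha> \<Longrightarrow> \<exists>k. unimod_at \<sigma> (st i) (\<alpha> ! i) k"
  using LE_uni unimodal_iff by blast

lemma inj_block: "\<sigma> permutes {1..n} \<Longrightarrow> inj_on \<sigma> B"
  by (rule permutes_inj_on)

lemma card_X: "\<sigma> permutes {1..n} \<Longrightarrow> i < length \<alpha> \<Longrightarrow> card (X \<sigma> i) = \<alpha> ! i"
  unfolding X_def by (simp add: card_image[OF inj_block] block_eq)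

lemma X_sub: assumes perm: "\<sigma> permutes {1..n}" shows "X \<sigma> i \<subseteq> {1..n}"
proof
  fix x assume "x \<in> X \<sigma> i"
  then obtain p where p: "p \<in> block \<alpha> i" "x = \<sigma> p" unfolding X_def by auto
  have "p \<in> {1..n}" using p block_sub by blast
  thus "x \<in> {1..n}" using permutes_in_image[OF perm, of p] p by simp
qed

lemma X_fin: "finite (X \<sigma> i)" unfolding X_def block_def by simp

lemma X_ne: assumes i: "i < length \<alpha>" shows "X \<sigma> i \<noteq> {}"
proof -
  have "st i \<in> block \<alpha> i" using block_eq[OF i] pos[OF i] by simp
  thus ?thesis unfolding X_def by blast
qed

lemma arr_self:
  assumes "\<sigma> \<in> LE" "i < length \<alpha>" "p \<in> block \<alpha> i"
  shows "\<sigma> p = arr (st i) (X \<sigma> i) (left \<sigma> i) p"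
proof -
  obtain k where u: "unimod_at \<sigma> (st i) (\<alpha> ! i) k" using valley assms by blast
  have l: "left \<sigma> i = \<sigma> ` {st i..<k}" unfolding left_def using Dint_eq[OF assms(2) u] by simp
  have x: "X \<sigma> i = \<sigma> ` {st i..<st i + \<alpha> ! i}" unfolding X_def using block_eq assms by simp
  show ?thesis unfolding l x
    using V_arr[OF u inj_block[OF LE_perm[OF assms(1)]]] assms block_eq by auto
qed

lemma order_self:
  assumes "\<sigma> \<in> LE" "i < length \<alpha>" "p \<in> block \<alpha> i" "q \<in> block \<alpha> i" "p < q"
  shows "prec (left \<sigma> i) (\<sigma> p) (\<sigma> q)"
proof -
  obtain k where u: "unimod_at \<sigma> (st i) (\<alpha> ! i) k" using valley assms by blast
  have l: "left \<sigma> i = \<sigma> ` {st i..<k}" unfolding left_def using Dint_eq[OF assms(2) u] by simp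
  show ?thesis unfolding l
    using V_order[OF u inj_block[OF LE_perm[OF assms(1)]]] assms block_eq by auto
qed

lemma Min_minl:
  assumes "Y \<subseteq> {1..n}" "finite Y" "Y \<noteq> {}" shows "Min Y \<in> minl Y"
proof -
  have "\<not> strict le (iw u) (iw (Min Y))" if "u \<in> Y" for u
    using natl[of u "Min Y"] that assms Min_le[OF assms(2) that] Min_in[OF assms(2,3)] by fastforce
  thus ?thesis unfolding minl_def using Min_in[OF assms(2,3)] by blast
qed

lemma left_min:
  assumes s: "\<sigma> \<in> LE" and i: "i < length \<alpha>"
  shows "left \<sigma> i \<subseteq> minl (X \<sigma> i) - {Min (X \<sigma> i)}"
proof
  fix v assume "v \<in> left \<sigma> i"
  then obtain j where j: "j \<in> block \<alpha> i" "Suc j \<in> block \<alpha> i" "\<sigma> (Suc j) < \<sigma> j" "v = \<sigma> j"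
    unfolding left_def Dint_def by auto
  have perm: "\<sigma> permutes {1..n}" using LE_perm[OF s] .
  have vX: "v \<in> X \<sigma> i" using j unfolding X_def by auto
  have sX: "\<sigma> (Suc j) \<in> X \<sigma> i" using j unfolding X_def by auto
  have vm: "v \<noteq> Min (X \<sigma> i)" using Min_le[OF X_fin sX] j by auto
  have vL: "v \<in> left \<sigma> i" using j unfolding left_def Dint_def by auto
  have "\<not> strict le (iw u) (iw v)" if uX: "u \<in> X \<sigma> i" for u
  proof
    assume sl: "strict le (iw u) (iw v)"
    obtain p where p: "p \<in> block \<alpha> i" "u = \<sigma> p" using uX unfolding X_def by auto
    have un: "u \<in> {1..n}" "v \<in> {1..n}" using X_sub[OF perm, of i] uX vX by blast+
    have "inv \<sigma> u < inv \<sigma> v" using LE_lin[OF s un sl] .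
    hence "p < j" using p j permutes_inverses(2)[OF perm] by simp
    hence "prec (left \<sigma> i) u v" using order_self[OF s i p(1) j(1)] p j by simp
    hence "v < u" using vL by (auto simp: prec_def)
    moreover have "u < v" using natl[OF un sl] .
    ultimately show False by simp
  qed
  thus "v \<in> minl (X \<sigma> i) - {Min (X \<sigma> i)}" unfolding minl_def using vX vm by blast
qed

lemma bp_eq: "block_poset \<alpha> P w \<sigma> i = iw ` X \<sigma> i"
  unfolding block_poset_def X_def by auto

lemma umin_iff:
  assumes perm: "\<sigma> permutes {1..n}" and i: "i < length \<alpha>"
  shows "unique_min le (block_poset \<alpha> P w \<sigma> i) \<longleftrightarrow> minl (X \<sigma> i) \<subseteq> {Min (X \<sigma> i)}"
proof -
  let ?Y = "X \<sigma> i" let ?m = "Min ?Y"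
  have Yn: "?Y \<subseteq> {1..n}" using X_sub[OF perm] .
  have mm: "?m \<in> minl ?Y" using Min_minl[OF Yn X_fin X_ne[OF i]] .
  have key: "(x \<in> iw ` ?Y \<and> \<not> (\<exists>y\<in>iw ` ?Y. strict le y x)) \<longleftrightarrow> (\<exists>v\<in>minl ?Y. x = iw v)" for x
    unfolding minl_def by blast
  show ?thesis unfolding bp_eq unique_min_def key
  proof
    assume h: "\<exists>!x. \<exists>v\<in>minl ?Y. x = iw v"
    show "minl ?Y \<subseteq> {?m}"
    proof
      fix v assume v: "v \<in> minl ?Y"
      have "iw v = iw ?m" using h v mm by blast
      moreover have "v \<in> {1..n}" "?m \<in> {1..n}" using v mm Yn unfolding minl_def by auto
      ultimately show "v \<in> {?m}" using iw_inj by blast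
    qed
  next
    assume h: "minl ?Y \<subseteq> {?m}"
    show "\<exists>!x. \<exists>v\<in>minl ?Y. x = iw v" using h mm by (intro ex1I[of _ "iw ?m"]) auto
  qed
qed

abbreviation Dn :: "(nat \<Rightarrow> nat) \<Rightarrow> nat set" where "Dn \<tau> \<equiv> Des n \<tau> - comp_set \<alpha>"
definition Intl :: "nat \<Rightarrow> nat set" where "Intl i = {j. j \<in> block \<alpha> i \<and> Suc j \<in> block \<alpha> i}"

lemma Dn_fin: "finite (Dn \<tau>)"
proof -
  have "Des n \<tau> \<subseteq> {1..n-1}" unfolding Des_def by auto
  thus ?thesis by (meson finite_Diff finite_atLeastAtMost finite_subset)
qed

lemma Dn_split:
  assumes i: "i < length \<alpha>"
  shows "card (Dn \<tau>) = card (Dn \<tau> - Intl i) + card (Dint \<tau> i)"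
proof -
  have e: "Dn \<tau> \<inter> Intl i = Dint \<tau> i"
  proof
    show "Dn \<tau> \<inter> Intl i \<subseteq> Dint \<tau> i" unfolding Des_def Intl_def Dint_def by auto
    show "Dint \<tau> i \<subseteq> Dn \<tau> \<inter> Intl i"
    proof
      fix j assume j: "j \<in> Dint \<tau> i"
      hence j1: "j \<in> block \<alpha> i" "Suc j \<in> block \<alpha> i" "\<tau> (Suc j) < \<tau> j" unfolding Dint_def by auto
      have "j \<in> {1..n-1}" using Int_range[OF j1(1,2)] .
      moreover have "j \<notin> comp_set \<alpha>" using internal_not_S[OF i j1(1,2)] .
      ultimately show "j \<in> Dn \<tau> \<inter> Intl i" using j1 unfolding Des_def Intl_def by auto
    qed
  qed
  have u: "Dn \<tau> = (Dn \<tau> - Intl i) \<union> (Dn \<tau> \<inter> Intl i)" by blast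
  have "card (Dn \<tau>) = card (Dn \<tau> - Intl i) + card (Dn \<tau> \<inter> Intl i)"
    by (subst u, rule card_Un_disjoint) (use Dn_fin[of \<tau>] in auto)
  thus ?thesis using e by simp
qed

lemma card_left: "inj_on \<tau> (block \<alpha> i) \<Longrightarrow> card (left \<tau> i) = card (Dint \<tau> i)"
  unfolding left_def by (rule card_image, erule inj_on_subset) (auto simp: Dint_def)

lemma Dn_outside:
  assumes i: "i < length \<alpha>" and ho: "\<And>p. p \<notin> block \<alpha> i \<Longrightarrow> h p = \<sigma> p"
  shows "Dn h - Intl i = Dn \<sigma> - Intl i"
proof -
  have eq: "h j = \<sigma> j \<and> h (Suc j) = \<sigma> (Suc j)"
    if j: "j \<in> {1..n-1}" "j \<notin> comp_set \<alpha>" "j \<notin> Intl i" for j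
  proof -
    obtain r where r: "r < length \<alpha>" "j \<in> block \<alpha> r" "Suc j \<in> block \<alpha> r"
      using nonS_internal[OF j(1,2)] by blast
    have "r \<noteq> i" using r j(3) unfolding Intl_def by auto
    hence "j \<notin> block \<alpha> i" "Suc j \<notin> block \<alpha> i" using block_disj[of r i] r by auto
    thus ?thesis using ho by simp
  qed
  show ?thesis
  proof (intro set_eqI iffI)
    fix j assume "j \<in> Dn h - Intl i"
    thus "j \<in> Dn \<sigma> - Intl i" using eq[of j] unfolding Des_def by auto
  next
    fix j assume "j \<in> Dn \<sigma> - Intl i"
    thus "j \<in> Dn h - Intl i" using eq[of j] unfolding Des_def by auto
  qed
qed

lemma minl_sub: "minl Y \<subseteq> Y" unfolding minl_def by auto

lemma toggle:
  assumes s: "\<sigma> \<in> LE" and i: "i < length \<alpha>" and L: "L' \<subseteq> minl (X \<sigma> i) - {Min (X \<sigma> i)}"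
  defines "h \<equiv> (\<lambda>p. if p \<in> block \<alpha> i then arr (st i) (X \<sigma> i) L' p else \<sigma> p)"
  shows "h \<in> LE" "\<forall>j<length \<alpha>. X h j = X \<sigma> j" "left h i = L'"
        "card (Dn h) + card (left \<sigma> i) = card (Dn \<sigma>) + card L'"
proof -
  let ?a = "st i" and ?c = "\<alpha> ! i" and ?Y = "X \<sigma> i"
  have perm: "\<sigma> permutes {1..n}" using LE_perm[OF s] .
  have B: "block \<alpha> i = {?a..<?a+?c}" using block_eq[OF i] .
  have cY: "card ?Y = ?c" using card_X[OF perm i] .
  have Yf: "finite ?Y" using X_fin .
  have Yne: "?Y \<noteq> {}" using X_ne[OF i] .
  have LY: "L' \<subseteq> ?Y - {Min ?Y}" using L minl_sub by blast
  have hB: "h p = arr ?a ?Y L' p" if "p \<in> block \<alpha> i" for p using that unfolding h_def by simp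
  have hO: "h p = \<sigma> p" if "p \<notin> block \<alpha> i" for p using that unfolding h_def by simp
  have img: "h ` block \<alpha> i = ?Y"
  proof -
    have "h ` block \<alpha> i = arr ?a ?Y L' ` block \<alpha> i" using hB by (rule image_cong[OF refl])
    also have "\<dots> = ?Y" using arr_image[OF Yf, of ?a L'] B cY by simp
    finally show ?thesis .
  qed
  have injB: "inj_on h (block \<alpha> i)"
  proof -
    have "inj_on (arr ?a ?Y L') (block \<alpha> i)" using arr_inj[OF Yf, of ?a L'] B cY by simp
    moreover have "inj_on h (block \<alpha> i) = inj_on (arr ?a ?Y L') (block \<alpha> i)"
      by (rule inj_on_cong) (rule hB)
    ultimately show ?thesis by simp
  qed
  show XX: "\<forall>j<length \<alpha>. X h j = X \<sigma> j"
  proof (intro allI impI)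
    fix j assume j: "j < length \<alpha>"
    show "X h j = X \<sigma> j"
    proof (cases "j = i")
      case True thus ?thesis using img unfolding X_def by simp
    next
      case False
      hence "block \<alpha> j \<inter> block \<alpha> i = {}" using block_disj by blast
      hence "\<And>p. p \<in> block \<alpha> j \<Longrightarrow> h p = \<sigma> p" using hO by blast
      thus ?thesis unfolding X_def by (rule image_cong[OF refl])
    qed
  qed
  have bijB: "bij_betw h (block \<alpha> i) ?Y" using injB img by (simp add: bij_betw_def)
  have bijR: "bij_betw h ({1..n} - block \<alpha> i) ({1..n} - ?Y)"
  proof -
    have inj: "inj \<sigma>" using permutes_inj[OF perm] .
    have "\<sigma> ` ({1..n} - block \<alpha> i) = \<sigma> ` {1..n} - \<sigma> ` block \<alpha> i" using image_set_diff[OF inj] .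
    also have "\<dots> = {1..n} - ?Y" using permutes_image[OF perm] unfolding X_def by simp
    moreover have "inj_on \<sigma> ({1..n} - block \<alpha> i)" using inj_block[OF perm] .
    ultimately have "bij_betw \<sigma> ({1..n} - block \<alpha> i) ({1..n} - ?Y)"
      unfolding bij_betw_def by simp
    moreover have "bij_betw h ({1..n} - block \<alpha> i) ({1..n} - ?Y) = bij_betw \<sigma> ({1..n} - block \<alpha> i) ({1..n} - ?Y)"
      by (rule bij_betw_cong) (simp add: hO)
    ultimately show ?thesis by simp
  qed
  have bij: "bij_betw h {1..n} {1..n}"
  proof -
    have "bij_betw h (block \<alpha> i \<union> ({1..n} - block \<alpha> i)) (?Y \<union> ({1..n} - ?Y))"
      by (rule bij_betw_combine[OF bijB bijR]) auto
    moreover have "block \<alpha> i \<union> ({1..n} - block \<alpha> i) = {1..n}" using block_sub by blast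
    moreover have "?Y \<union> ({1..n} - ?Y) = {1..n}" using X_sub[OF perm, of i] by blast
    ultimately show ?thesis by simp
  qed
  have hperm: "h permutes {1..n}"
  proof (rule bij_imp_permutes[OF bij])
    fix x :: nat assume x: "x \<notin> {1..n}"
    hence "x \<notin> block \<alpha> i" using block_sub by blast
    hence "h x = \<sigma> x" by (rule hO)
    also have "\<sigma> x = x" using permutes_not_in[OF perm x] .
    finally show "h x = x" .
  qed
  have uh: "unimod_at h ?a ?c (?a + card L')"
  proof -
    have "unimod_at (arr ?a ?Y L') ?a ?c (?a + card L')" using arr_unimod(1)[OF Yf Yne LY, of ?a] cY by simp
    moreover have "unimod_at h ?a ?c (?a + card L') = unimod_at (arr ?a ?Y L') ?a ?c (?a + card L')"
      by (rule unimod_at_cong) (use hB B in auto)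
    ultimately show ?thesis by simp
  qed
  have uni: "alpha_unimodal \<alpha> h"
    unfolding unimodal_iff
  proof (intro allI impI)
    fix j assume j: "j < length \<alpha>"
    show "\<exists>k. unimod_at h (st j) (\<alpha> ! j) k"
    proof (cases "j = i")
      case True thus ?thesis using uh by blast
    next
      case False
      obtain k where k: "unimod_at \<sigma> (st j) (\<alpha> ! j) k" using valley[OF s j] by blast
      have d: "block \<alpha> j \<inter> block \<alpha> i = {}" using block_disj False by blast
      have "unimod_at h (st j) (\<alpha> ! j) k = unimod_at \<sigma> (st j) (\<alpha> ! j) k"
      proof (rule unimod_at_cong)
        fix p assume "st j \<le> p" "p < st j + \<alpha> ! j"
        hence "p \<in> block \<alpha> j" using block_eq[OF j] by simp
        hence "p \<notin> block \<alpha> i" using d by blast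
        thus "h p = \<sigma> p" by (rule hO)
      qed
      thus ?thesis using k by blast
    qed
  qed
  have invY: "inv h u \<in> block \<alpha> i" if "u \<in> ?Y" for u
  proof -
    have "u \<in> h ` block \<alpha> i" using that img by simp
    then obtain q where q: "q \<in> block \<alpha> i" "u = h q" by (rule imageE) simp
    have "inv h u = q" unfolding q(2) using permutes_inverses(2)[OF hperm] .
    thus ?thesis using q(1) by simp
  qed
  have invsY: "inv \<sigma> u \<in> block \<alpha> i" if "u \<in> ?Y" for u
  proof -
    have "u \<in> \<sigma> ` block \<alpha> i" using that unfolding X_def by simp
    then obtain q where q: "q \<in> block \<alpha> i" "u = \<sigma> q" by (rule imageE) simp
    have "inv \<sigma> u = q" unfolding q(2) using permutes_inverses(2)[OF perm] .
    thus ?thesis using q(1) by simp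
  qed
  have invsN: "inv \<sigma> u \<notin> block \<alpha> i" if "u \<notin> ?Y" for u
  proof
    assume "inv \<sigma> u \<in> block \<alpha> i"
    hence "\<sigma> (inv \<sigma> u) \<in> ?Y" unfolding X_def by blast
    thus False using that permutes_inverses(1)[OF perm] by simp
  qed
  have invN: "inv h u = inv \<sigma> u" if "u \<notin> ?Y" for u
  proof -
    have "h (inv \<sigma> u) = \<sigma> (inv \<sigma> u)" using hO invsN[OF that] by blast
    also have "\<dots> = u" using permutes_inverses(1)[OF perm] .
    finally have "h (inv \<sigma> u) = u" .
    thus ?thesis using permutes_inv_eq[OF hperm, of u "inv \<sigma> u"] by simp
  qed
  have lin: "inv h (w x) < inv h (w y)" if xy: "x \<in> P" "y \<in> P" "strict le x y" for x y
  proof -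
    let ?u = "w x" and ?v = "w y"
    have un: "?u \<in> {1..n}" "?v \<in> {1..n}" using w_in xy by auto
    have sl: "strict le (iw ?u) (iw ?v)" using xy iw_w by simp
    have ss: "inv \<sigma> ?u < inv \<sigma> ?v" using LE_lin[OF s un sl] .
    have uv: "?u < ?v" using natl[OF un sl] .
    show ?thesis
    proof (cases "?u \<in> ?Y")
      case uY: True
      show ?thesis
      proof (cases "?v \<in> ?Y")
        case vY: True
        have vL: "?v \<notin> L'"
        proof
          assume "?v \<in> L'"
          hence "?v \<in> minl ?Y" using L by blast
          thus False using uY sl unfolding minl_def by blast
        qed
        have pr: "prec L' ?u ?v" using vL uv by (auto simp: prec_def)
        let ?p = "inv h ?u" and ?q = "inv h ?v"
        have pB: "?p \<in> block \<alpha> i" by (rule invY[OF uY])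
        have qB: "?q \<in> block \<alpha> i" by (rule invY[OF vY])
        have hp1: "h ?p = ?u" by (rule permutes_inverses(1)[OF hperm])
        have hp2: "h ?q = ?v" by (rule permutes_inverses(1)[OF hperm])
        show ?thesis
        proof (rule ccontr)
          assume "\<not> ?p < ?q"
          moreover have "?p \<noteq> ?q"
          proof
            assume e: "?p = ?q"
            have "?u = h ?p" using hp1 by (rule sym)
            also have "\<dots> = h ?q" using e by (rule arg_cong)
            also have "\<dots> = ?v" by (rule hp2)
            finally show False using uv by simp
          qed
          ultimately have "?q < ?p" by simp
          moreover have "?a \<le> ?q" "?p < ?a + card ?Y" using pB qB B cY by auto
          ultimately have "prec L' (arr ?a ?Y L' ?q) (arr ?a ?Y L' ?p)"
            using arr_ord[OF Yf, of ?a ?q ?p L'] by blast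
          moreover have "arr ?a ?Y L' ?q = ?v" using hB[OF qB, symmetric] hp2 by (rule trans)
          moreover have "arr ?a ?Y L' ?p = ?u" using hB[OF pB, symmetric] hp1 by (rule trans)
          ultimately have "prec L' ?v ?u" by simp
          thus False using pr prec_asym by blast
        qed
      next
        case vN: False
        have "inv \<sigma> ?u \<in> block \<alpha> i" using invsY[OF uY] .
        moreover have "inv \<sigma> ?v \<notin> block \<alpha> i" using invsN[OF vN] .
        ultimately have "?a + ?c \<le> inv \<sigma> ?v" using ss B by auto
        moreover have "inv h ?u < ?a + ?c" using invY[OF uY] B by simp
        ultimately show ?thesis using invN[OF vN] by simp
      qed
    next
      case uN: False
      show ?thesis
      proof (cases "?v \<in> ?Y")
        case vY: True
        have "inv \<sigma> ?v \<in> block \<alpha> i" using invsY[OF vY] .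
        moreover have "inv \<sigma> ?u \<notin> block \<alpha> i" using invsN[OF uN] .
        ultimately have "inv \<sigma> ?u < ?a" using ss B by auto
        moreover have "?a \<le> inv h ?v" using invY[OF vY] B by simp
        ultimately show ?thesis using invN[OF uN] by simp
      next
        case vN: False
        thus ?thesis using invN uN ss by simp
      qed
    qed
  qed
  show "h \<in> LE"
    unfolding lin_ext_alpha_def lin_ext_def using hperm uni lin by simp
  have cL: "card L' < ?c" using uh unfolding unimod_at_def by simp
  have Dh: "Dint h i = {?a..<?a + card L'}" using Dint_eq[OF i uh] .
  show lh: "left h i = L'"
  proof -
    have "left h i = h ` {?a..<?a + card L'}" unfolding left_def Dh ..
    also have "\<dots> = arr ?a ?Y L' ` {?a..<?a + card L'}"
      by (rule image_cong[OF refl]) (use hB B cL in auto)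
    also have "\<dots> = L'" using arr_unimod(2)[OF Yf Yne LY] .
    finally show ?thesis .
  qed
  have c1: "card (Dn h) = card (Dn \<sigma> - Intl i) + card L'"
    using Dn_split[OF i, of h] Dn_outside[OF i hO] card_left[OF injB] lh by simp
  have c2: "card (Dn \<sigma>) = card (Dn \<sigma> - Intl i) + card (left \<sigma> i)"
    using Dn_split[OF i, of \<sigma>] card_left[OF inj_block[OF perm]] by simp
  show "card (Dn h) + card (left \<sigma> i) = card (Dn \<sigma>) + card L'" using c1 c2 by simp
qed

abbreviation Star where "Star \<equiv> lin_ext_alpha_star \<alpha> P le w n"

definition bad :: "(nat \<Rightarrow> nat) \<Rightarrow> nat set" where
  "bad \<sigma> = {i. i < length \<alpha> \<and> \<not> unique_min le (block_poset \<alpha> P w \<sigma> i)}"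
definition i0 :: "(nat \<Rightarrow> nat) \<Rightarrow> nat" where "i0 \<sigma> = Min (bad \<sigma>)"
definition tt :: "(nat \<Rightarrow> nat) \<Rightarrow> nat" where
  "tt \<sigma> = Max (minl (X \<sigma> (i0 \<sigma>)) - {Min (X \<sigma> (i0 \<sigma>))})"
definition Ln :: "(nat \<Rightarrow> nat) \<Rightarrow> nat set" where
  "Ln \<sigma> = (if tt \<sigma> \<in> left \<sigma> (i0 \<sigma>) then left \<sigma> (i0 \<sigma>) - {tt \<sigma>} else insert (tt \<sigma>) (left \<sigma> (i0 \<sigma>)))"
definition g :: "(nat \<Rightarrow> nat) \<Rightarrow> nat \<Rightarrow> nat" where
  "g \<sigma> = (\<lambda>p. if p \<in> block \<alpha> (i0 \<sigma>) then arr (st (i0 \<sigma>)) (X \<sigma> (i0 \<sigma>)) (Ln \<sigma>) p else \<sigma> p)"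

lemma Star_iff: "\<sigma> \<in> Star \<longleftrightarrow> \<sigma> \<in> LE \<and> bad \<sigma> = {}"
  unfolding lin_ext_alpha_star_def bad_def by auto

lemma bad_fin: "finite (bad \<sigma>)" unfolding bad_def by simp

lemma inv_props:
  assumes s: "\<sigma> \<in> LE" and ns: "\<sigma> \<notin> Star"
  shows "g \<sigma> \<in> LE" "g \<sigma> \<notin> Star" "g (g \<sigma>) = \<sigma>"
        "(-1::int) ^ card (Dn (g \<sigma>)) = - ((-1) ^ card (Dn \<sigma>))"
proof -
  let ?i = "i0 \<sigma>"
  have perm: "\<sigma> permutes {1..n}" using LE_perm[OF s] .
  have bne: "bad \<sigma> \<noteq> {}" using Star_iff s ns by blast
  have ib: "?i \<in> bad \<sigma>" unfolding i0_def using Min_in[OF bad_fin bne] .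
  hence i: "?i < length \<alpha>" and nu: "\<not> unique_min le (block_poset \<alpha> P w \<sigma> ?i)"
    unfolding bad_def by auto
  let ?Y = "X \<sigma> ?i" let ?m = "Min ?Y"
  have nm: "\<not> minl ?Y \<subseteq> {?m}" using umin_iff[OF perm i] nu by simp
  hence ne: "minl ?Y - {?m} \<noteq> {}" by blast
  have fm: "finite (minl ?Y - {?m})" using X_fin minl_sub by (meson finite_Diff finite_subset)
  have t: "tt \<sigma> \<in> minl ?Y - {?m}" unfolding tt_def using Max_in[OF fm ne] .
  have lm: "left \<sigma> ?i \<subseteq> minl ?Y - {?m}" using left_min[OF s i] .
  have Lsub: "Ln \<sigma> \<subseteq> minl ?Y - {?m}" unfolding Ln_def using t lm by auto
  have gdef: "g \<sigma> = (\<lambda>p. if p \<in> block \<alpha> ?i then arr (st ?i) ?Y (Ln \<sigma>) p else \<sigma> p)"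
    unfolding g_def ..
  note T = toggle[OF s i Lsub, folded gdef]
  show gLE: "g \<sigma> \<in> LE" using T(1) .
  have XX: "X (g \<sigma>) j = X \<sigma> j" if "j < length \<alpha>" for j using T(2) that by blast
  have badeq: "bad (g \<sigma>) = bad \<sigma>" unfolding bad_def bp_eq using XX by auto
  show "g \<sigma> \<notin> Star" using Star_iff badeq bne by blast
  have i0eq: "i0 (g \<sigma>) = ?i" unfolding i0_def badeq ..
  have Xeq: "X (g \<sigma>) ?i = ?Y" using XX[OF i] .
  have tteq: "tt (g \<sigma>) = tt \<sigma>" unfolding tt_def i0eq Xeq ..
  have lg: "left (g \<sigma>) ?i = Ln \<sigma>" using T(3) .
  have Lneq: "Ln (g \<sigma>) = left \<sigma> ?i"
  proof (cases "tt \<sigma> \<in> left \<sigma> ?i")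
    case True
    hence "Ln \<sigma> = left \<sigma> ?i - {tt \<sigma>}" unfolding Ln_def by simp
    thus ?thesis unfolding Ln_def i0eq tteq lg using True by auto
  next
    case False
    hence "Ln \<sigma> = insert (tt \<sigma>) (left \<sigma> ?i)" unfolding Ln_def by simp
    thus ?thesis unfolding Ln_def i0eq tteq lg using False by auto
  qed
  show "g (g \<sigma>) = \<sigma>"
  proof
    fix p
    show "g (g \<sigma>) p = \<sigma> p"
    proof (cases "p \<in> block \<alpha> ?i")
      case True
      have "g (g \<sigma>) p = arr (st ?i) ?Y (left \<sigma> ?i) p"
        using True unfolding g_def[of "g \<sigma>"] i0eq Xeq Lneq by simp
      also have "\<dots> = \<sigma> p" using arr_self[OF s i True] by simp
      finally show ?thesis .
    next
      case False
      thus ?thesis unfolding g_def[of "g \<sigma>"] i0eq by (simp add: gdef)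
    qed
  qed
  have fl: "finite (left \<sigma> ?i)" using lm fm finite_subset by blast
  have c: "card (Dn (g \<sigma>)) + card (left \<sigma> ?i) = card (Dn \<sigma>) + card (Ln \<sigma>)" using T(4) .
  show "(-1::int) ^ card (Dn (g \<sigma>)) = - ((-1) ^ card (Dn \<sigma>))"
  proof (cases "tt \<sigma> \<in> left \<sigma> ?i")
    case True
    hence "card (Ln \<sigma>) + 1 = card (left \<sigma> ?i)" unfolding Ln_def using fl
      by (simp add: card_Diff_singleton) (metis card_0_eq empty_iff Suc_pred neq0_conv)
    hence "card (Dn \<sigma>) = Suc (card (Dn (g \<sigma>)))" using c by simp
    thus ?thesis by simp
  next
    case False
    hence "card (Ln \<sigma>) = Suc (card (left \<sigma> ?i))" unfolding Ln_def using fl by simp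
    hence "card (Dn (g \<sigma>)) = Suc (card (Dn \<sigma>))" using c by simp
    thus ?thesis by simp
  qed
qed

lemma Star_sign:
  assumes st: "\<sigma> \<in> Star" shows "Dn \<sigma> = {}"
proof (rule ccontr)
  assume "Dn \<sigma> \<noteq> {}"
  then obtain j where j: "j \<in> Des n \<sigma>" "j \<notin> comp_set \<alpha>" by blast
  have s: "\<sigma> \<in> LE" and b: "bad \<sigma> = {}" using Star_iff st by auto
  have perm: "\<sigma> permutes {1..n}" using LE_perm[OF s] .
  have jr: "j \<in> {1..n-1}" "\<sigma> (Suc j) < \<sigma> j" using j(1) unfolding Des_def by auto
  obtain r where r: "r < length \<alpha>" "j \<in> block \<alpha> r" "Suc j \<in> block \<alpha> r"
    using nonS_internal[OF jr(1) j(2)] by blast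
  have "unique_min le (block_poset \<alpha> P w \<sigma> r)" using b r(1) unfolding bad_def by auto
  hence u: "minl (X \<sigma> r) \<subseteq> {Min (X \<sigma> r)}" using umin_iff[OF perm r(1)] by simp
  have "\<sigma> j \<in> left \<sigma> r" unfolding left_def Dint_def using r jr by auto
  thus False using left_min[OF s r(1)] u by blast
qed

lemma main:
  "(\<Sum>\<sigma>\<in>LE. (-1::int) ^ card (Dn \<sigma>)) = int (card Star)"
proof -
  let ?f = "\<lambda>\<sigma>. (-1::int) ^ card (Dn \<sigma>)"
  have fin: "finite LE"
  proof (rule finite_subset[OF _ finite_permutations[of "{1..n}"]])
    show "LE \<subseteq> {p. p permutes {1..n}}" using LE_perm by blast
  qed simp
  have sub: "Star \<subseteq> LE" using Star_iff by blast
  have "sum ?f LE = sum ?f (LE - Star) + sum ?f Star" using sum.subset_diff[OF sub fin] .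
  moreover have "sum ?f (LE - Star) = 0"
    by (rule sum_involution[where g = g]) (use fin inv_props in auto)
  moreover have "sum ?f Star = sum (\<lambda>_. 1) Star"
  proof (rule sum.cong[OF refl])
    fix \<sigma> assume "\<sigma> \<in> Star"
    hence "Dn \<sigma> = {}" by (rule Star_sign)
    hence "card (Dn \<sigma>) = 0" by (simp only: card.empty)
    thus "?f \<sigma> = 1" by simp
  qed
  ultimately show ?thesis by simp
qed

end

theorem theorem2p8:
  fixes P :: "'a set" and le :: "'a \<Rightarrow> 'a \<Rightarrow> bool" and w :: "'a \<Rightarrow> nat"
    and n :: nat and \<alpha> :: "nat list"
  assumes "labeled_poset P le w n"
    and "naturally_labeled P le w"
    and "is_composition \<alpha> n"
  shows "(\<Sum>\<sigma>\<in>lin_ext_alpha \<alpha> P le w n. (-1::int) ^ card (Des n \<sigma> - comp_set \<alpha>))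
         = int (card (lin_ext_alpha_star \<alpha> P le w n))"
  using TP.main[OF TP.intro[OF assms]] .

end
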